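(* Let $F:\ell^2(\mathbb{Z})\to\ell^2(\mathbb{Z})$ be the bilateral weighted forward shift $Fe_n=w_ne_{n+1}$ ($n\in\mathbb{Z}$), where $w_n=3$ for $n\ge0$ and $w_n=4$ for $n<0$. Let $\mathcal{M}=\{(a_n)_{n\in\mathbb{Z}}\in\ell^2(\mathbb{Z}):a_{2n}=0\text{ for all }n\in\mathbb{Z}\}$. Then $F$ is $\mathcal{M}$-diskcyclic but not $\mathcal{M}$-hypercyclic.
   Context: $(e_n)_{n\in\mathbb{Z}}$ is the canonical orthonormal basis of $\ell^2(\mathbb{Z})$. $\mathbb{D}=\{\alpha\in\mathbb{C}:|\alpha|\le1\}$. An operator $T$ is $\mathcal{M}$-diskcyclic if there is $x$ with $\{\alpha T^nx:\alpha\in\mathbb{D},n\ge0\}\cap\mathcal{M}$ dense in $\mathcal{M}$, and $\mathcal{M}$-hypercyclic if there is $x$ with $\{T^nx:n\ge0\}\cap\mathcal{M}$ dense in $\mathcal{M}$. *)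

theory Defs
  imports "HOL-Analysis.Analysis"
begin

definition ell2 :: "(int \<Rightarrow> complex) set" where
  "ell2 = {a. (\<lambda>n. (cmod (a n))^2) summable_on UNIV}"

definition ell2_norm :: "(int \<Rightarrow> complex) \<Rightarrow> real" where
  "ell2_norm a = sqrt (infsum (\<lambda>n. (cmod (a n))^2) UNIV)"

definition ell2_dense_in :: "(int \<Rightarrow> complex) set \<Rightarrow> (int \<Rightarrow> complex) set \<Rightarrow> bool" where
  "ell2_dense_in S M \<longleftrightarrow> S \<subseteq> M \<and>
     (\<forall>y\<in>M. \<forall>e>0. \<exists>z\<in>S. ell2_norm (\<lambda>n. z n - y n) < e)"

definition M_diskcyclic ::
  "((int \<Rightarrow> complex) \<Rightarrow> (int \<Rightarrow> complex)) \<Rightarrow> (int \<Rightarrow> complex) set \<Rightarrow> bool" where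
  "M_diskcyclic T M \<longleftrightarrow> (\<exists>x\<in>ell2.
     ell2_dense_in ({(\<lambda>k. \<alpha> * (T ^^ n) x k) | \<alpha> n. cmod \<alpha> \<le> 1} \<inter> M) M)"

definition M_hypercyclic ::
  "((int \<Rightarrow> complex) \<Rightarrow> (int \<Rightarrow> complex)) \<Rightarrow> (int \<Rightarrow> complex) set \<Rightarrow> bool" where
  "M_hypercyclic T M \<longleftrightarrow> (\<exists>x\<in>ell2.
     ell2_dense_in ({(T ^^ n) x | n. True} \<inter> M) M)"

definition wt :: "int \<Rightarrow> complex" where
  "wt n = (if n \<ge> 0 then 3 else 4)"

text \<open>Bilateral weighted forward shift: F e_n = w_n e_(n+1), i.e. (F a)(m) = w_(m-1) a(m-1).\<close>
definition Fshift :: "(int \<Rightarrow> complex) \<Rightarrow> (int \<Rightarrow> complex)" where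
  "Fshift a = (\<lambda>m. wt (m - 1) * a (m - 1))"

definition Msub :: "(int \<Rightarrow> complex) set" where
  "Msub = {a \<in> ell2. \<forall>n. a (2 * n) = 0}"

end

theory Submission
  imports Defs "HOL-Library.Countable"
begin


lemma l1_to_l2:
  fixes z :: "int \<Rightarrow> complex"
  assumes s: "(\<lambda>m. cmod (z m)) summable_on UNIV"
  shows "(\<lambda>m. (cmod (z m))^2) summable_on UNIV \<and>
         infsum (\<lambda>m. (cmod (z m))^2) UNIV \<le> (infsum (\<lambda>m. cmod (z m)) UNIV)^2"
proof -
  let ?S = "infsum (\<lambda>m. cmod (z m)) UNIV"
  have pt: "cmod (z m) \<le> ?S" for m
  proof -
    have "sum (\<lambda>m. cmod (z m)) {m} \<le> ?S"
      by (rule finite_sum_le_infsum[OF s]) auto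
    then show ?thesis by simp
  qed
  have b: "(cmod (z m))^2 \<le> ?S * cmod (z m)" for m
    using pt[of m] by (simp add: power2_eq_square mult_right_mono)
  have s2: "(\<lambda>m. ?S * cmod (z m)) summable_on UNIV"
    using s by (rule summable_on_cmult_right)
  have s3: "(\<lambda>m. (cmod (z m))^2) summable_on UNIV"
    by (rule summable_on_comparison_test[OF s2]) (use b in auto)
  have "infsum (\<lambda>m. (cmod (z m))^2) UNIV \<le> infsum (\<lambda>m. ?S * cmod (z m)) UNIV"
    by (rule infsum_mono[OF s3 s2 b])
  also have "\<dots> = ?S * ?S" by (simp add: infsum_cmult_right')
  finally show ?thesis using s3 by (simp add: power2_eq_square)
qed

lemma l1_series:
  fixes a :: "nat \<Rightarrow> int \<Rightarrow> complex" and B :: "nat \<Rightarrow> real"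
  assumes sa: "\<And>i. (\<lambda>m. cmod (a i m)) summable_on UNIV"
    and ba: "\<And>i. infsum (\<lambda>m. cmod (a i m)) UNIV \<le> B i"
    and sB: "B summable_on UNIV"
  shows "(\<forall>m. (\<lambda>i. a i m) summable_on UNIV) \<and>
         (\<lambda>m. cmod (infsum (\<lambda>i. a i m) UNIV)) summable_on UNIV \<and>
         infsum (\<lambda>m. cmod (infsum (\<lambda>i. a i m) UNIV)) UNIV \<le> infsum B UNIV"
proof -
  define g where "g = (\<lambda>(i,m). cmod (a i m))"
  have Bnn: "0 \<le> B i" for i using ba[of i] infsum_nonneg[of UNIV "\<lambda>m. cmod (a i m)"]
    by (smt (verit) norm_ge_zero)
  have sN: "(\<lambda>i. infsum (\<lambda>m. cmod (a i m)) UNIV) summable_on UNIV"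
    by (rule summable_on_comparison_test[OF sB]) (use ba in \<open>auto intro: infsum_nonneg\<close>)
  have gS: "g summable_on Sigma UNIV (\<lambda>_. UNIV)"
    unfolding g_def
    by (rule summable_on_SigmaI[where g="\<lambda>i. infsum (\<lambda>m. cmod (a i m)) UNIV"])
       (use sa sN in \<open>auto\<close>)
  define h where "h = (\<lambda>(m,i). cmod (a i m))"
  have hS: "h summable_on Sigma UNIV (\<lambda>_. UNIV)"
  proof -
    have "h summable_on (UNIV \<times> UNIV) \<longleftrightarrow> g summable_on (UNIV \<times> UNIV)"
      by (rule summable_on_reindex_bij_witness[where i=prod.swap and j=prod.swap])
         (auto simp: g_def h_def)
    with gS show ?thesis by simp
  qed
  have habs: "(\<lambda>x. norm ((\<lambda>(m,i). a i m) x)) summable_on Sigma UNIV (\<lambda>_. UNIV)"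
    using hS unfolding h_def by (simp add: case_prod_unfold)
  from habs[unfolded Infinite_Sum.abs_summable_on_Sigma_iff]
  have p1: "\<forall>m. (\<lambda>i. norm (a i m)) summable_on UNIV"
    and p2: "(\<lambda>m. norm (infsum (\<lambda>i. norm (a i m)) UNIV)) summable_on UNIV"
    by auto
  have c1: "\<forall>m. (\<lambda>i. a i m) summable_on UNIV"
  proof
    fix m
    have "(\<lambda>i. norm (a i m)) summable_on UNIV" using p1 by (rule spec)
    then show "(\<lambda>i. a i m) summable_on UNIV"
      by (rule abs_summable_summable)
  qed
  have p2': "(\<lambda>m. infsum (\<lambda>i. cmod (a i m)) UNIV) summable_on UNIV"
  proof -
    have "norm (infsum (\<lambda>i. cmod (a i m)) UNIV) = infsum (\<lambda>i. cmod (a i m)) UNIV" for m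
      by (simp add: infsum_nonneg)
    then show ?thesis using p2 by simp
  qed
  have bnd: "cmod (infsum (\<lambda>i. a i m) UNIV) \<le> infsum (\<lambda>i. cmod (a i m)) UNIV" for m
    by (rule norm_infsum_bound) (use p1 in \<open>rule spec\<close>)
  have c2: "(\<lambda>m. cmod (infsum (\<lambda>i. a i m) UNIV)) summable_on UNIV"
    by (rule summable_on_comparison_test[OF p2']) (use bnd in auto)
  have "infsum (\<lambda>m. cmod (infsum (\<lambda>i. a i m) UNIV)) UNIV
        \<le> infsum (\<lambda>m. infsum (\<lambda>i. cmod (a i m)) UNIV) UNIV"
    by (rule infsum_mono[OF c2 p2' bnd])
  also have "\<dots> = infsum (\<lambda>i. infsum (\<lambda>m. cmod (a i m)) UNIV) UNIV"
    by (rule infsum_swap_banach) (use hS in \<open>simp add: h_def case_prod_unfold\<close>)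
  also have "\<dots> \<le> infsum B UNIV"
    by (rule infsum_mono[OF sN sB ba])
  finally show ?thesis using c1 c2 by blast
qed

lemma fin_l1:
  fixes f :: "int \<Rightarrow> complex" and C :: real
  assumes "finite T" "\<And>m. m \<notin> T \<Longrightarrow> f m = 0" "\<And>m. cmod (f m) \<le> C"
  shows "(\<lambda>m. cmod (f m)) summable_on UNIV \<and> infsum (\<lambda>m. cmod (f m)) UNIV \<le> card T * C"
proof -
  have eq: "infsum (\<lambda>m. cmod (f m)) UNIV = sum (\<lambda>m. cmod (f m)) T"
    using assms by (subst infsum_cong_neutral[where T=T and g="\<lambda>m. cmod (f m)"]) auto
  have s: "(\<lambda>m. cmod (f m)) summable_on UNIV"
    by (rule finite_nonzero_values_imp_summable_on, rule finite_subset[OF _ assms(1)]) (use assms in auto)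
  have "sum (\<lambda>m. cmod (f m)) T \<le> sum (\<lambda>m. C) T" by (rule sum_mono) (use assms in auto)
  then show ?thesis using eq s by simp
qed




definition wr :: "int \<Rightarrow> real" where "wr t = (if t \<ge> 0 then 3 else 4)"

lemma wt_wr: "wt t = complex_of_real (wr t)"
  by (simp add: wt_def wr_def)

primrec Pr :: "int \<Rightarrow> nat \<Rightarrow> real" where
  "Pr p 0 = 1"
| "Pr p (Suc d) = Pr p d * wr (p + int d)"

lemma wr_bounds: "3 \<le> wr t" "wr t \<le> 4" by (auto simp: wr_def)

lemma Pr_ge: "3 ^ d \<le> Pr p d"
proof (induction d)
  case (Suc d)
  have "3 ^ d * 3 \<le> Pr p d * wr (p + int d)"
    by (rule mult_mono[OF Suc.IH wr_bounds(1)]) (auto intro: order_trans[OF _ Suc.IH])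
  then show ?case by (simp add: mult.commute)
qed simp

lemma Pr_pos: "0 < Pr p d"
  using Pr_ge[of d p] by (smt (verit) zero_less_power)

lemma Pr_ge1: "1 \<le> Pr p d"
  using Pr_ge[of d p] by (smt (verit) one_le_power)

lemma Pr_le: "Pr p d \<le> 4 ^ d"
proof (induction d)
  case (Suc d)
  have "Pr p d * wr (p + int d) \<le> 4 ^ d * 4"
    by (rule mult_mono[OF Suc.IH wr_bounds(2)]) (use Pr_pos[of p d] wr_bounds[of "p + int d"] in auto)
  then show ?case by (simp add: mult.commute)
qed simp

lemma Pr_add: "Pr p (a + b) = Pr p a * Pr (p + int a) b"
  by (induction b) (simp_all add: algebra_simps)

lemma Pr_nonneg: "p \<ge> 0 \<Longrightarrow> Pr p d = 3 ^ d"
  by (induction d) (simp_all add: wr_def)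

lemma Pr_neg: "p + int d \<le> 0 \<Longrightarrow> Pr p d = 4 ^ d"
  by (induction d) (simp_all add: wr_def)

lemma Pr_upper: assumes "p \<ge> - int S" shows "Pr p d \<le> 4 ^ S * 3 ^ d"
proof (cases "d \<le> S")
  case True
  have "Pr p d \<le> 4 ^ d" by (rule Pr_le)
  also have "\<dots> \<le> 4 ^ S" using True by (simp add: power_increasing)
  also have "\<dots> \<le> 4 ^ S * 3 ^ d" by simp
  finally show ?thesis .
next
  case False
  then obtain r where d: "d = S + r" by (metis le_add_diff_inverse nat_le_linear)
  have "Pr p d = Pr p S * Pr (p + int S) r" by (simp add: d Pr_add)
  also have "Pr (p + int S) r = 3 ^ r" using assms by (intro Pr_nonneg) simp
  also have "Pr p S * 3 ^ r \<le> 4 ^ S * 3 ^ r" using Pr_le[of p S] by simp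
  also have "\<dots> \<le> 4 ^ S * 3 ^ d" by (simp add: d power_increasing)
  finally show ?thesis .
qed

lemma Pr_lower: assumes "p + int d \<le> int S" shows "4 ^ d \<le> 4 ^ S * Pr p d"
proof (cases "d \<le> S")
  case True
  have "(4::real) ^ d \<le> 4 ^ S" using True by (simp add: power_increasing)
  also have "\<dots> \<le> 4 ^ S * Pr p d" using Pr_ge1[of p d] by simp
  finally show ?thesis .
next
  case False
  then obtain r where d: "d = r + S" by (metis add.commute le_add_diff_inverse nat_le_linear)
  have "Pr p d = Pr p r * Pr (p + int r) S" by (simp add: d Pr_add)
  also have "Pr p r = 4 ^ r" using assms d by (intro Pr_neg) simp
  finally have "Pr p d \<ge> 4 ^ r" using Pr_ge1[of "p + int r" S] by simp
  then show ?thesis by (simp add: d power_add mult_left_mono)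
qed

lemma F_pow: "(Fshift ^^ k) a m = complex_of_real (Pr (m - int k) k) * a (m - int k)"
proof (induction k arbitrary: m)
  case 0
  then show ?case by simp
next
  case (Suc k)
  have "(Fshift ^^ Suc k) a m = wt (m - 1) * (Fshift ^^ k) a (m - 1)"
    by (simp add: Fshift_def)
  also have "\<dots> = complex_of_real (wr (m - 1) * Pr (m - 1 - int k) k) * a (m - 1 - int k)"
    by (simp add: Suc wt_wr)
  also have "wr (m - 1) * Pr (m - 1 - int k) k = Pr (m - int (Suc k)) (Suc k)"
    by (simp add: algebra_simps)
  finally show ?case by (simp add: algebra_simps)
qed




definition cv :: "rat \<times> rat \<Rightarrow> complex" where
  "cv = (\<lambda>(a,b). Complex (of_rat a) (of_rat b))"

definition rv :: "(int \<times> rat \<times> rat) list \<Rightarrow> int \<Rightarrow> complex" where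
  "rv L m = sum_list (map (\<lambda>(k,c). if k = m then cv c else 0) L)"

definition qvec :: "(int \<times> rat \<times> rat) list \<Rightarrow> int \<Rightarrow> complex" where
  "qvec L m = (if odd m then rv L m else 0)"

definition supS :: "(int \<times> rat \<times> rat) list \<Rightarrow> nat" where
  "supS L = sum_list (map (\<lambda>(k,c). nat \<bar>k\<bar>) L)"

definition supA :: "(int \<times> rat \<times> rat) list \<Rightarrow> real" where
  "supA L = sum_list (map (\<lambda>(k,c). cmod (cv c)) L)"

lemma rv_bound: "cmod (rv L m) \<le> supA L"
proof (induction L)
  case Nil
  then show ?case by (simp add: rv_def supA_def)
next
  case (Cons x L)
  obtain k c where x: "x = (k,c)" by (cases x)
  have e1: "rv (x # L) m = (if k = m then cv c else 0) + rv L m" by (simp add: rv_def x)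
  have e2: "supA (x # L) = cmod (cv c) + supA L" by (simp add: supA_def x)
  have "cmod ((if k = m then cv c else 0) + rv L m) \<le> cmod (if k = m then cv c else 0) + cmod (rv L m)"
    by (rule norm_triangle_ineq)
  moreover have "cmod (if k = m then cv c else 0) \<le> cmod (cv c)" by simp
  ultimately show ?case unfolding e1 e2 using Cons by linarith
qed

lemma supA_nonneg: "0 \<le> supA L"
  using rv_bound[of L 0] norm_ge_zero by (rule order_trans[rotated])

lemma qvec_bound: "cmod (qvec L m) \<le> supA L"
  using rv_bound[of L m] supA_nonneg[of L] by (simp add: qvec_def)

lemma rv_supp: "int (supS L) < \<bar>m\<bar> \<Longrightarrow> rv L m = 0"
proof (induction L)
  case Nil
  then show ?case by (simp add: rv_def)
next
  case (Cons x L)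
  obtain k c where x: "x = (k,c)" by (cases x)
  have S: "supS (x # L) = nat \<bar>k\<bar> + supS L" by (simp add: supS_def x)
  have "rv (x # L) m = (if k = m then cv c else 0) + rv L m" by (simp add: rv_def x)
  moreover have "k \<noteq> m" using Cons.prems S by auto
  moreover have "rv L m = 0" using Cons S by auto
  ultimately show ?case by simp
qed

lemma qvec_supp: "int (supS L) < \<bar>m\<bar> \<Longrightarrow> qvec L m = 0"
  by (simp add: qvec_def rv_supp)

lemma qvec_even: "even m \<Longrightarrow> qvec L m = 0"
  by (simp add: qvec_def)

lemma rv_list:
  assumes "distinct xs"
  shows "rv (map (\<lambda>m. (m, g m)) xs) m = (if m \<in> set xs then cv (g m) else 0)"
proof -
  have "rv (map (\<lambda>m. (m, g m)) xs) m = sum_list (map (\<lambda>k. if k = m then cv (g k) else 0) xs)"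
    by (simp add: rv_def o_def)
  also have "\<dots> = (\<Sum>k\<in>set xs. if k = m then cv (g k) else 0)"
    using assms by (simp add: sum_list_distinct_conv_sum_set)
  also have "\<dots> = (if m \<in> set xs then cv (g m) else 0)"
    by (simp add: sum.delta')
  finally show ?thesis .
qed

lemma rat_approx: fixes x d :: real shows "0 < d \<Longrightarrow> \<exists>q::rat. \<bar>x - of_rat q\<bar> < d"
proof -
  assume d: "0 < d"
  obtain r where "r \<in> \<rat>" "x - d < r" "r < x + d" using Rats_dense_in_real[of "x - d" "x + d"] d by auto
  then show ?thesis by (metis Rats_cases abs_diff_less_iff add.commute diff_less_eq less_diff_eq)
qed

lemma approx:
  assumes y: "y \<in> Msub" and e: "0 < \<epsilon>"
  shows "\<exists>L. (\<lambda>m. (cmod (y m - qvec L m))^2) summable_on UNIV \<and>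
             infsum (\<lambda>m. (cmod (y m - qvec L m))^2) UNIV < \<epsilon>"
proof -
  define f where "f m = (cmod (y m))^2" for m
  have fs: "f summable_on UNIV" using y by (simp add: Msub_def ell2_def f_def[abs_def])
  obtain F where F: "finite F" "dist (sum f F) (infsum f UNIV) \<le> \<epsilon>/4"
    using infsum_finite_approximation[OF fs, of "\<epsilon>/4"] e by auto
  have fsF: "f summable_on (-F)" by (rule summable_on_subset_banach[OF fs]) auto
  have "infsum f UNIV = infsum f (F \<union> -F)" by simp
  also have "\<dots> = infsum f F + infsum f (-F)"
    by (rule infsum_Un_disjoint) (use F fsF in auto)
  finally have tail: "infsum f (-F) \<le> \<epsilon>/4" using F by (simp add: dist_real_def)
  define \<eta> where "\<eta> = \<epsilon> / (4 * (card F + 1))"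
  have eta: "0 < \<eta>" using e by (simp add: \<eta>_def)
  define \<delta> where "\<delta> = sqrt (\<eta>/2)"
  have dl: "0 < \<delta>" using eta by (simp add: \<delta>_def)
  have "\<forall>m. \<exists>q. \<bar>Re (y m) - of_rat q\<bar> < \<delta>" using rat_approx dl by blast
  then obtain ra where ra: "\<And>m. \<bar>Re (y m) - of_rat (ra m)\<bar> < \<delta>" by metis
  have "\<forall>m. \<exists>q. \<bar>Im (y m) - of_rat q\<bar> < \<delta>" using rat_approx dl by blast
  then obtain rb where rb: "\<And>m. \<bar>Im (y m) - of_rat (rb m)\<bar> < \<delta>" by metis
  define L where "L = map (\<lambda>m. (m, (ra m, rb m))) (sorted_list_of_set F)"
  have vL: "qvec L m = (if odd m \<and> m \<in> F then Complex (of_rat (ra m)) (of_rat (rb m)) else 0)" for m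
    using rv_list[of "sorted_list_of_set F" "\<lambda>m. (ra m, rb m)" m] F(1)
    by (simp add: qvec_def L_def cv_def)
  define h where "h m = (cmod (y m - qvec L m))^2" for m
  have hout: "h m = f m" if "m \<notin> F" for m using that by (simp add: h_def f_def vL)
  have hin: "h m \<le> \<eta>" if mF: "m \<in> F" for m
  proof (cases "odd m")
    case True
    have "h m = (Re (y m) - of_rat (ra m))^2 + (Im (y m) - of_rat (rb m))^2"
      using True mF by (simp add: h_def vL cmod_power2)
    also have "(Re (y m) - of_rat (ra m))^2 \<le> \<delta>^2"
      using ra[of m] by (metis abs_ge_zero less_imp_le power2_abs power_mono)
    also have "(Im (y m) - of_rat (rb m))^2 \<le> \<delta>^2"
      using rb[of m] by (metis abs_ge_zero less_imp_le power2_abs power_mono)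
    also have "\<delta>^2 + \<delta>^2 = \<eta>" using eta by (simp add: \<delta>_def)
    finally show ?thesis by simp
  next
    case False
    then have "even m" by simp
    then obtain n where "m = 2 * n" by (rule evenE)
    then have "y m = 0" using y by (simp add: Msub_def)
    then show ?thesis using False eta by (simp add: h_def vL)
  qed
  have hsF: "h summable_on (-F)"
    using fsF by (rule summable_on_cong[THEN iffD1, rotated]) (simp add: hout)
  have hs: "h summable_on UNIV"
  proof -
    have "h summable_on (F \<union> -F)" by (rule summable_on_Un_disjoint) (use F hsF in auto)
    then show ?thesis by simp
  qed
  have "infsum h UNIV = infsum h (F \<union> -F)" by simp
  also have "\<dots> = infsum h F + infsum h (-F)"
    by (rule infsum_Un_disjoint) (use F hsF in auto)
  also have "infsum h (-F) = infsum f (-F)" by (rule infsum_cong) (simp add: hout)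
  also have "infsum h F = sum h F" using F by simp
  also have "sum h F \<le> card F * \<eta>" using sum_mono[of F h "\<lambda>_. \<eta>"] hin by auto
  finally have "infsum h UNIV \<le> card F * \<eta> + \<epsilon>/4" using tail by simp
  also have "card F * \<eta> \<le> \<epsilon>/4"
    using e by (simp add: \<eta>_def field_simps)
  finally have "infsum h UNIV < \<epsilon>" using e by simp
  then show ?thesis using hs unfolding h_def by blast
qed




definition lam :: real where "lam = 7/2"
definition rho :: real where "rho = 7/8"

lemma ex_pow: assumes "0 \<le> T" "0 < \<epsilon>" shows "\<exists>N. T * rho ^ N \<le> \<epsilon>"
proof (cases "T = 0")
  case True then show ?thesis using assms by auto
next
  case False
  then have T: "0 < T" using assms by simp
  obtain N where "rho ^ N < \<epsilon> / T" using real_arch_pow_inv[of "\<epsilon>/T" rho] T assms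
    by (auto simp: rho_def)
  then have "T * rho ^ N \<le> \<epsilon>" using T by (simp add: field_simps)
  then show ?thesis by blast
qed

lemma coef_bound:
  fixes n s S :: nat and q :: int
  assumes q: "\<bar>q\<bar> \<le> int S"
  shows "lam ^ n / lam ^ s * Pr (q - int n) s / Pr (q - int n) n
          \<le> 4 ^ S * rho ^ (if s \<le> n then n - s else s - n)"
proof (cases "s \<le> n")
  case False
  define d where "d = s - n"
  have s: "s = n + d" using False by (simp add: d_def)
  have P: "Pr (q - int n) s = Pr (q - int n) n * Pr q d" by (simp add: s Pr_add)
  have pos: "0 < Pr (q - int n) n" by (rule Pr_pos)
  have "lam ^ n / lam ^ s * Pr (q - int n) s / Pr (q - int n) n = Pr q d / lam ^ d"
  proof -
    have ls: "lam ^ s = lam ^ n * lam ^ d" by (simp add: s power_add)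
    have "lam ^ n > 0" "lam ^ d > 0" "lam \<noteq> 0" by (simp_all add: lam_def)
    then show ?thesis using pos by (simp add: P ls field_simps)
  qed
  also have "\<dots> \<le> 4 ^ S * 3 ^ d / lam ^ d"
    by (rule divide_right_mono) (use Pr_upper[of S q d] q in \<open>auto simp: lam_def\<close>)
  also have "\<dots> = 4 ^ S * (3 / lam) ^ d" by (simp add: power_divide)
  also have "\<dots> \<le> 4 ^ S * rho ^ d"
    by (rule mult_left_mono, rule power_mono) (auto simp: lam_def rho_def)
  finally show ?thesis using False by (simp add: d_def)
next
  case True
  define d where "d = n - s"
  have n: "n = s + d" using True by (simp add: d_def)
  have P: "Pr (q - int n) n = Pr (q - int n) s * Pr (q - int d) d"
  proof -
    have "Pr (q - int n) n = Pr (q - int n) (s + d)" using n by simp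
    also have "\<dots> = Pr (q - int n) s * Pr (q - int n + int s) d" by (rule Pr_add)
    also have "q - int n + int s = q - int d" using n by simp
    finally show ?thesis .
  qed
  have pos: "0 < Pr (q - int n) s" "0 < Pr (q - int d) d" by (rule Pr_pos)+
  have low: "4 ^ d \<le> 4 ^ S * Pr (q - int d) d" by (rule Pr_lower) (use q in simp)
  have "lam ^ n / lam ^ s * Pr (q - int n) s / Pr (q - int n) n = lam ^ d / Pr (q - int d) d"
  proof -
    have ls: "lam ^ n = lam ^ s * lam ^ d" by (simp add: n power_add)
    have "lam ^ s > 0" "lam ^ d > 0" "lam \<noteq> 0" by (simp_all add: lam_def)
    then show ?thesis using pos by (simp add: P ls field_simps)
  qed
  also have "\<dots> \<le> lam ^ d / (4 ^ d / 4 ^ S)"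
    by (rule divide_left_mono) (use low pos in \<open>auto simp: lam_def field_simps\<close>)
  also have "\<dots> = 4 ^ S * (lam / 4) ^ d" by (simp add: power_divide)
  also have "lam / 4 = rho" by (simp add: lam_def rho_def)
  finally show ?thesis using True by (simp add: d_def)
qed




definition Lseq :: "nat \<Rightarrow> (int \<times> rat \<times> rat) list" where
  "Lseq i = from_nat (fst (prod_decode i))"
definition yv :: "nat \<Rightarrow> int \<Rightarrow> complex" where "yv i = qvec (Lseq i)"
definition SS :: "nat \<Rightarrow> nat" where "SS i = supS (Lseq i)"
definition AA :: "nat \<Rightarrow> real" where "AA i = supA (Lseq i)"
definition KK :: "nat \<Rightarrow> real" where "KK i = (2 * SS i + 1) * 4 ^ SS i * AA i"
definition TT :: "nat \<Rightarrow> real" where "TT k = (\<Sum>l\<le>k. KK l)"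
definition gg :: "nat \<Rightarrow> nat" where "gg k = (SOME N. TT k * rho ^ N \<le> (1/4) ^ k)"
definition nn :: "nat \<Rightarrow> nat" where "nn i = 2 * (\<Sum>k\<le>i. gg k)"

lemma KK_nonneg: "0 \<le> KK i"
  by (simp add: KK_def AA_def supA_nonneg)

lemma KK_le_TT: "i \<le> k \<Longrightarrow> KK i \<le> TT k"
  unfolding TT_def by (rule member_le_sum) (auto simp: KK_nonneg)

lemma TT_nonneg: "0 \<le> TT k"
  by (simp add: TT_def sum_nonneg KK_nonneg)

lemma gg_prop: "TT k * rho ^ gg k \<le> (1/4) ^ k"
  unfolding gg_def by (rule someI_ex, rule ex_pow) (auto simp: TT_nonneg)

lemma nn_gap: assumes "i < j" shows "nn i + gg j \<le> nn j"
proof -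
  have U: "{..j} = {..i} \<union> {i<..j}" using assms by auto
  have "(\<Sum>k\<le>j. gg k) = (\<Sum>k\<le>i. gg k) + (\<Sum>k\<in>{i<..j}. gg k)"
    unfolding U by (rule sum.union_disjoint) auto
  moreover have "gg j \<le> (\<Sum>k\<in>{i<..j}. gg k)"
    by (rule member_le_sum) (use assms in auto)
  ultimately show ?thesis by (simp add: nn_def)
qed

lemma nn_ge: "gg i \<le> nn i"
proof -
  have "gg i \<le> (\<Sum>k\<le>i. gg k)" by (rule member_le_sum) auto
  then show ?thesis by (simp add: nn_def)
qed

lemma nn_even: "even (nn i)" by (simp add: nn_def)

lemma rho_mono: "a \<le> b \<Longrightarrow> rho ^ b \<le> rho ^ a"
  by (rule power_decreasing) (auto simp: rho_def)

lemma rho_nonneg: "0 \<le> rho ^ a" by (simp add: rho_def)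

lemma quarter: "((1::real)/4) ^ k \<le> (1/2) ^ (i + k)" if "i \<le> k"
proof -
  have "((1::real)/4) ^ k = (1/2) ^ (2 * k)" by (simp add: power_mult power2_eq_square)
  also have "\<dots> \<le> (1/2) ^ (i + k)" by (rule power_decreasing) (use that in auto)
  finally show ?thesis .
qed

lemma dist_bound:
  assumes "i \<noteq> j"
  shows "KK i * rho ^ (if nn j \<le> nn i then nn i - nn j else nn j - nn i) \<le> (1/2) ^ (i + j)"
proof (cases "i < j")
  case True
  have g: "nn i + gg j \<le> nn j" by (rule nn_gap[OF True])
  then have e: "(if nn j \<le> nn i then nn i - nn j else nn j - nn i) = nn j - nn i"
    by (cases "gg j = 0") auto
  have "KK i * rho ^ (nn j - nn i) \<le> TT j * rho ^ gg j"
    by (rule mult_mono) (use KK_le_TT[of i j] True rho_mono[of "gg j" "nn j - nn i"] g TT_nonneg rho_nonneg in auto)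
  also have "\<dots> \<le> (1/4) ^ j" by (rule gg_prop)
  also have "\<dots> \<le> (1/2) ^ (i + j)" by (rule quarter) (use True in simp)
  finally show ?thesis by (simp add: e)
next
  case False
  then have ji: "j < i" using assms by simp
  have g: "nn j + gg i \<le> nn i" by (rule nn_gap[OF ji])
  then have e: "(if nn j \<le> nn i then nn i - nn j else nn j - nn i) = nn i - nn j"
    by auto
  have "KK i * rho ^ (nn i - nn j) \<le> TT i * rho ^ gg i"
    by (rule mult_mono) (use KK_le_TT[of i i] rho_mono[of "gg i" "nn i - nn j"] g TT_nonneg rho_nonneg in auto)
  also have "\<dots> \<le> (1/4) ^ i" by (rule gg_prop)
  also have "\<dots> \<le> (1/2) ^ (j + i)" by (rule quarter) (use ji in simp)
  finally show ?thesis by (simp add: e add.commute)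
qed

lemma zero_bound: "KK i * rho ^ nn i \<le> (1/2) ^ i"
proof -
  have "KK i * rho ^ nn i \<le> TT i * rho ^ gg i"
    by (rule mult_mono) (use KK_le_TT[of i i] rho_mono[OF nn_ge[of i]] TT_nonneg rho_nonneg in auto)
  also have "\<dots> \<le> (1/4) ^ i" by (rule gg_prop)
  also have "\<dots> \<le> (1/2) ^ (0 + i)" by (rule quarter) simp
  finally show ?thesis by simp
qed




definition GG :: "nat \<Rightarrow> nat \<Rightarrow> int \<Rightarrow> complex" where
  "GG i s m = complex_of_real (lam ^ nn i / lam ^ s * Pr (m - int s) s / Pr (m - int s) (nn i))
              * yv i (m - int s + int (nn i))"

definition dd :: "nat \<Rightarrow> nat \<Rightarrow> nat" where
  "dd s n = (if s \<le> n then n - s else s - n)"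

lemma lam_pos: "0 < lam" by (simp add: lam_def)

lemma GG_l1:
  "(\<lambda>m. cmod (GG i s m)) summable_on UNIV \<and>
   infsum (\<lambda>m. cmod (GG i s m)) UNIV \<le> KK i * rho ^ dd s (nn i)"
proof -
  define S where "S = SS i"
  define n where "n = nn i"
  define T where "T = {int s - int n - int S .. int s - int n + int S}"
  define C where "C = 4 ^ S * rho ^ dd s n * AA i"
  have Cnn: "0 \<le> C" by (simp add: C_def AA_def supA_nonneg rho_def)
  have out: "GG i s m = 0" if "m \<notin> T" for m
  proof -
    have "int (supS (Lseq i)) < \<bar>m - int s + int n\<bar>" using that by (auto simp: T_def S_def SS_def)
    then show ?thesis by (simp add: GG_def yv_def qvec_supp n_def)
  qed
  have pt: "cmod (GG i s m) \<le> C" for m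
  proof (cases "m \<in> T")
    case False then show ?thesis using out Cnn by simp
  next
    case True
    define q where "q = m - int s + int n"
    have q: "\<bar>q\<bar> \<le> int S" using True by (auto simp: T_def q_def)
    have mq: "m - int s = q - int n" by (simp add: q_def)
    define c where "c = lam ^ n / lam ^ s * Pr (q - int n) s / Pr (q - int n) n"
    have c0: "0 \<le> c" using lam_pos Pr_pos[of "q - int n" s] Pr_pos[of "q - int n" n]
      by (simp add: c_def)
    have cb: "c \<le> 4 ^ S * rho ^ dd s n"
      using coef_bound[OF q, of n s] by (simp add: c_def dd_def)
    have g: "GG i s m = complex_of_real c * yv i q"
      unfolding GG_def c_def mq[symmetric] by (simp add: q_def n_def)
    have "cmod (GG i s m) = c * cmod (yv i q)"
      unfolding g norm_mult using c0 by simp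
    also have "\<dots> \<le> c * AA i"
      by (rule mult_left_mono) (use c0 qvec_bound in \<open>auto simp: yv_def AA_def\<close>)
    also have "\<dots> \<le> (4 ^ S * rho ^ dd s n) * AA i"
      by (rule mult_right_mono[OF cb]) (simp add: AA_def supA_nonneg)
    finally show ?thesis by (simp add: C_def)
  qed
  have fin: "finite T" by (simp add: T_def)
  from fin_l1[OF fin out pt]
  have r: "(\<lambda>m. cmod (GG i s m)) summable_on UNIV" "infsum (\<lambda>m. cmod (GG i s m)) UNIV \<le> card T * C"
    by auto
  have "card T = 2 * S + 1" by (simp add: T_def)
  then have "card T * C = KK i * rho ^ dd s (nn i)"
    by (simp add: C_def KK_def S_def n_def algebra_simps)
  then show ?thesis using r by simp
qed

lemma GG_shift:
  "complex_of_real (lam ^ s) * GG i s m = complex_of_real (Pr (m - int s) s) * GG i 0 (m - int s)"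
proof -
  have "lam ^ s \<noteq> 0" "lam \<noteq> 0" using lam_pos by simp_all
  then show ?thesis by (simp add: GG_def field_simps)
qed

lemma GG_diag: "GG j (nn j) m = yv j m"
proof -
  have "lam ^ nn j \<noteq> 0" "lam \<noteq> 0" using lam_pos by simp_all
  moreover have "Pr (m - int (nn j)) (nn j) \<noteq> 0" using Pr_pos by (metis less_irrefl)
  ultimately show ?thesis by (simp add: GG_def)
qed

lemma GG_even: "even s \<Longrightarrow> GG i s (2 * k) = 0"
proof -
  assume "even s"
  then have "even (2 * k - int s + int (nn i))" using nn_even[of i] by simp
  then show ?thesis by (simp add: GG_def yv_def qvec_even)
qed

lemma half_hs: "((\<lambda>i. (1/2::real) ^ i) has_sum 2) UNIV"
proof -
  have "(\<lambda>i. (1/2::real) ^ i) sums (1 / (1 - 1/2))" by (rule geometric_sums) simp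
  then have "(\<lambda>i. (1/2::real) ^ i) sums 2" by simp
  then show ?thesis by (rule sums_nonneg_imp_has_sum) simp
qed

lemma half_j_hs: "((\<lambda>i. (1/2::real) ^ (i + j)) has_sum ((1/2)^j * 2)) UNIV"
proof -
  have "((\<lambda>i. (1/2::real)^j * (1/2) ^ i) has_sum ((1/2)^j * 2)) UNIV"
    by (rule has_sum_cmult_right[OF half_hs])
  then show ?thesis by (simp add: power_add mult.commute)
qed

definition xx :: "int \<Rightarrow> complex" where "xx m = infsum (\<lambda>i. GG i 0 m) UNIV"

lemma xx_ell2: "xx \<in> ell2"
proof -
  have "(\<forall>m. (\<lambda>i. GG i 0 m) summable_on UNIV) \<and>
         (\<lambda>m. cmod (infsum (\<lambda>i. GG i 0 m) UNIV)) summable_on UNIV \<and>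
         infsum (\<lambda>m. cmod (infsum (\<lambda>i. GG i 0 m) UNIV)) UNIV \<le> infsum (\<lambda>i. (1/2::real)^i) UNIV"
  proof (rule l1_series)
    show "(\<lambda>m. cmod (GG i 0 m)) summable_on UNIV" for i using GG_l1 by blast
    show "infsum (\<lambda>m. cmod (GG i 0 m)) UNIV \<le> (1/2)^i" for i
      using GG_l1[of i 0] zero_bound[of i] by (simp add: dd_def)
    show "(\<lambda>i. (1/2::real)^i) summable_on UNIV" using half_hs by (rule has_sum_imp_summable)
  qed
  then have "(\<lambda>m. cmod (xx m)) summable_on UNIV" by (simp add: xx_def[abs_def])
  then show ?thesis using l1_to_l2 by (simp add: ell2_def)
qed




definition zz :: "nat \<Rightarrow> int \<Rightarrow> complex" where
  "zz j m = infsum (\<lambda>i. GG i (nn j) m) UNIV"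

lemma dd_diag: "dd s s = 0" by (simp add: dd_def)

lemma GG_bound_j: "i \<noteq> j \<Longrightarrow> infsum (\<lambda>m. cmod (GG i (nn j) m)) UNIV \<le> (1/2) ^ (i + j)"
  using GG_l1[of i "nn j"] dist_bound[of i j] by (simp add: dd_def)

lemma zz_ell2: "zz j \<in> ell2"
proof -
  define B where "B i = (1/2::real) ^ (i + j) + (if i = j then KK j else 0)" for i
  have Bs: "B summable_on UNIV"
    unfolding B_def
    by (rule summable_on_add, rule has_sum_imp_summable[OF half_j_hs],
        rule finite_nonzero_values_imp_summable_on) auto
  have "(\<forall>m. (\<lambda>i. GG i (nn j) m) summable_on UNIV) \<and>
         (\<lambda>m. cmod (infsum (\<lambda>i. GG i (nn j) m) UNIV)) summable_on UNIV \<and>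
         infsum (\<lambda>m. cmod (infsum (\<lambda>i. GG i (nn j) m) UNIV)) UNIV \<le> infsum B UNIV"
  proof (rule l1_series[OF _ _ Bs])
    show "(\<lambda>m. cmod (GG i (nn j) m)) summable_on UNIV" for i using GG_l1 by blast
    show "infsum (\<lambda>m. cmod (GG i (nn j) m)) UNIV \<le> B i" for i
    proof (cases "i = j")
      case True
      have p: "0 \<le> (1/2::real)^(j+j)" by simp
      have h: "infsum (\<lambda>m. cmod (GG j (nn j) m)) UNIV \<le> KK j"
        using GG_l1[of j "nn j"] by (simp add: dd_diag)
      show ?thesis unfolding B_def using True add_increasing[OF p h] by simp
    next
      case False
      then show ?thesis using GG_bound_j[OF False] by (simp add: B_def)
    qed
  qed
  then have "(\<lambda>m. cmod (zz j m)) summable_on UNIV" by (simp add: zz_def[abs_def])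
  then show ?thesis using l1_to_l2 by (simp add: ell2_def)
qed

lemma zz_err:
  "(\<lambda>m. (cmod (zz j m - yv j m))^2) summable_on UNIV \<and>
   infsum (\<lambda>m. (cmod (zz j m - yv j m))^2) UNIV \<le> 4 * (1/4) ^ j"
proof -
  define E where "E i m = (if i = j then 0 else GG i (nn j) m)" for i m
  have R: "(\<forall>m. (\<lambda>i. E i m) summable_on UNIV) \<and>
         (\<lambda>m. cmod (infsum (\<lambda>i. E i m) UNIV)) summable_on UNIV \<and>
         infsum (\<lambda>m. cmod (infsum (\<lambda>i. E i m) UNIV)) UNIV \<le> infsum (\<lambda>i. (1/2::real) ^ (i + j)) UNIV"
  proof (rule l1_series[OF _ _ has_sum_imp_summable[OF half_j_hs]])
    show "(\<lambda>m. cmod (E i m)) summable_on UNIV" for i using GG_l1[of i "nn j"] by (cases "i = j") (simp_all add: E_def)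
    show "infsum (\<lambda>m. cmod (E i m)) UNIV \<le> (1/2) ^ (i + j)" for i
      using GG_bound_j[of i j] by (cases "i = j") (simp_all add: E_def)
  qed
  have eq: "zz j m - yv j m = infsum (\<lambda>i. E i m) UNIV" for m
  proof -
    have "zz j m = infsum (\<lambda>i. E i m + (if i = j then yv j m else 0)) UNIV"
      unfolding zz_def by (rule infsum_cong) (simp add: E_def GG_diag)
    also have "\<dots> = infsum (\<lambda>i. E i m) UNIV + infsum (\<lambda>i. if i = j then yv j m else 0) UNIV"
      by (rule infsum_add) (use R in \<open>auto intro: finite_nonzero_values_imp_summable_on\<close>)
    also have "infsum (\<lambda>i. if i = j then yv j m else 0) UNIV = yv j m"
      by (subst infsum_cong_neutral[where T="{j}" and g="\<lambda>i. yv j m"]) auto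
    finally show ?thesis by simp
  qed
  have s1: "(\<lambda>m. cmod (zz j m - yv j m)) summable_on UNIV" using R by (simp add: eq)
  have b1: "infsum (\<lambda>m. cmod (zz j m - yv j m)) UNIV \<le> (1/2)^j * 2"
    using R half_j_hs[of j] by (simp add: eq infsumI)
  from l1_to_l2[OF s1]
  have r2: "(\<lambda>m. (cmod (zz j m - yv j m))^2) summable_on UNIV"
    "infsum (\<lambda>m. (cmod (zz j m - yv j m))^2) UNIV \<le> (infsum (\<lambda>m. cmod (zz j m - yv j m)) UNIV)^2"
    by auto
  have "(infsum (\<lambda>m. cmod (zz j m - yv j m)) UNIV)^2 \<le> ((1/2)^j * 2)^2"
    by (rule power_mono[OF b1]) (simp add: infsum_nonneg)
  also have "((1/2::real)^j * 2)^2 = 4 * (1/4)^j"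
  proof -
    have "(2::real) ^ j * 2 ^ j = 4 ^ j" by (simp flip: power_mult_distrib)
    then show ?thesis by (simp add: power_mult_distrib power_divide power2_eq_square)
  qed
  finally show ?thesis using r2 by simp
qed

lemma zz_even: "zz j (2 * k) = 0"
  by (simp add: zz_def GG_even nn_even)

lemma zz_F: "(\<lambda>k. complex_of_real (1 / lam ^ nn j) * (Fshift ^^ nn j) xx k) = zz j"
proof
  fix k
  define s where "s = nn j"
  have "(Fshift ^^ s) xx k = complex_of_real (Pr (k - int s) s) * xx (k - int s)"
    by (rule F_pow)
  also have "\<dots> = infsum (\<lambda>i. complex_of_real (Pr (k - int s) s) * GG i 0 (k - int s)) UNIV"
    by (simp add: xx_def infsum_cmult_right')
  also have "\<dots> = infsum (\<lambda>i. complex_of_real (lam ^ s) * GG i s k) UNIV"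
    by (rule infsum_cong, rule GG_shift[symmetric])
  also have "\<dots> = complex_of_real (lam ^ s) * zz j k"
    by (simp add: zz_def s_def infsum_cmult_right')
  finally have "(Fshift ^^ s) xx k = complex_of_real (lam ^ s) * zz j k" .
  moreover have "lam ^ s \<noteq> 0" "lam \<noteq> 0" using lam_pos by simp_all
  ultimately show "complex_of_real (1 / lam ^ nn j) * (Fshift ^^ nn j) xx k = zz j k"
    by (simp add: s_def field_simps flip: of_real_mult)
qed




lemma sq_tri: "(cmod (a - b))^2 \<le> 2 * (cmod (a - c))^2 + 2 * (cmod (b - c))^2"
proof -
  have t: "cmod (a - b) \<le> cmod (a - c) + cmod (b - c)"
    using norm_triangle_ineq[of "a - c" "c - b"] by (simp add: norm_minus_commute)
  have "(cmod (a - b))^2 \<le> (cmod (a - c) + cmod (b - c))^2"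
    by (rule power_mono[OF t]) simp
  also have "\<dots> \<le> 2 * (cmod (a - c))^2 + 2 * (cmod (b - c))^2"
    by (smt (verit) power2_sum sum_squares_ge_zero power2_diff zero_le_power2)
  finally show ?thesis .
qed

lemma disk: "M_diskcyclic Fshift Msub"
  unfolding M_diskcyclic_def
proof (intro bexI[OF _ xx_ell2])
  show "ell2_dense_in ({(\<lambda>k. \<alpha> * (Fshift ^^ n) xx k) | \<alpha> n. cmod \<alpha> \<le> 1} \<inter> Msub) Msub"
    unfolding ell2_dense_in_def
  proof (intro conjI ballI allI impI)
    show "{(\<lambda>k. \<alpha> * (Fshift ^^ n) xx k) | \<alpha> n. cmod \<alpha> \<le> 1} \<inter> Msub \<subseteq> Msub" by blast
    fix y and e :: real
    assume y: "y \<in> Msub" and e: "0 < e"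
    obtain L where L: "(\<lambda>m. (cmod (y m - qvec L m))^2) summable_on UNIV"
      "infsum (\<lambda>m. (cmod (y m - qvec L m))^2) UNIV < e^2/4"
      using approx[OF y, of "e^2/4"] e by auto
    obtain r where r: "(1/4::real) ^ r < e^2/32"
      using real_arch_pow_inv[of "e^2/32" "1/4"] e by auto
    define j where "j = prod_encode (to_nat L, r)"
    have yj: "yv j = qvec L" by (simp add: yv_def Lseq_def j_def)
    have jr: "r \<le> j" by (simp add: j_def le_prod_encode_2)
    have qj: "(1/4::real) ^ j \<le> (1/4) ^ r" by (rule power_decreasing[OF jr]) auto
    define z where "z = zz j"
    have zS: "z \<in> {(\<lambda>k. \<alpha> * (Fshift ^^ n) xx k) | \<alpha> n. cmod \<alpha> \<le> 1}"
    proof -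
      have "1 \<le> lam ^ nn j" by (rule one_le_power) (simp add: lam_def)
      then have h: "1 / lam ^ nn j \<le> 1" by simp
      have p: "0 \<le> 1 / lam ^ nn j" using lam_pos by simp
      have "cmod (complex_of_real (1 / lam ^ nn j)) \<le> 1"
        unfolding norm_of_real abs_of_nonneg[OF p] by (rule h)
      then show ?thesis unfolding z_def zz_F[symmetric] by blast
    qed
    have zM: "z \<in> Msub" using zz_ell2 zz_even by (simp add: Msub_def z_def)
    from zz_err[of j]
    have ze: "(\<lambda>m. (cmod (z m - qvec L m))^2) summable_on UNIV"
      "infsum (\<lambda>m. (cmod (z m - qvec L m))^2) UNIV \<le> 4 * (1/4) ^ j"
      by (auto simp: z_def yj)
    define R where "R m = 2 * (cmod (z m - qvec L m))^2 + 2 * (cmod (y m - qvec L m))^2" for m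
    have Rs: "R summable_on UNIV" unfolding R_def
      by (intro summable_on_add summable_on_cmult_right ze L)
    have RR: "infsum R UNIV = 2 * infsum (\<lambda>m. (cmod (z m - qvec L m))^2) UNIV
                + 2 * infsum (\<lambda>m. (cmod (y m - qvec L m))^2) UNIV"
      unfolding R_def
      by (subst infsum_add) (auto intro: summable_on_cmult_right ze L simp: infsum_cmult_right')
    have pt: "(cmod (z m - y m))^2 \<le> R m" for m unfolding R_def by (rule sq_tri)
    have Ds: "(\<lambda>m. (cmod (z m - y m))^2) summable_on UNIV"
      by (rule summable_on_comparison_test[OF Rs pt]) simp
    have "0 < e^2" using e by simp
    have "infsum (\<lambda>m. (cmod (z m - y m))^2) UNIV \<le> infsum R UNIV"
      by (rule infsum_mono[OF Ds Rs pt])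
    also have "\<dots> < e^2" using RR ze(2) L(2) qj r \<open>0 < e^2\<close> by linarith
    finally have lt: "infsum (\<lambda>m. (cmod (z m - y m))^2) UNIV < e^2" .
    have nz: "ell2_norm (\<lambda>n. z n - y n) < e"
      unfolding ell2_norm_def using lt e
      by (metis abs_of_pos real_sqrt_abs real_sqrt_less_iff)
    show "\<exists>z\<in>{(\<lambda>k. \<alpha> * (Fshift ^^ n) xx k) | \<alpha> n. cmod \<alpha> \<le> 1} \<inter> Msub.
                 ell2_norm (\<lambda>n. z n - y n) < e"
    proof (rule bexI[where x=z])
      show "z \<in> {(\<lambda>k. \<alpha> * (Fshift ^^ n) xx k) | \<alpha> n. cmod \<alpha> \<le> 1} \<inter> Msub"
        by (rule IntI[OF zS zM])
    qed (rule nz)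
  qed
qed

lemma F_norm:
  assumes x: "x \<in> ell2" and z: "(Fshift ^^ n) x \<in> ell2"
  shows "infsum (\<lambda>m. (cmod (x m))^2) UNIV \<le> infsum (\<lambda>m. (cmod ((Fshift ^^ n) x m))^2) UNIV"
proof -
  have xs: "(\<lambda>m. (cmod (x m))^2) summable_on UNIV" using x by (simp add: ell2_def)
  have zs: "(\<lambda>m. (cmod ((Fshift ^^ n) x m))^2) summable_on UNIV" using z by (simp add: ell2_def)
  have re: "infsum (\<lambda>m. (cmod (x m))^2) UNIV = infsum (\<lambda>m. (cmod (x (m - int n)))^2) UNIV"
    by (rule infsum_reindex_bij_witness[where j="\<lambda>m. m + int n" and i="\<lambda>m. m - int n"]) auto
  have rs: "(\<lambda>m. (cmod (x (m - int n)))^2) summable_on UNIV"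
    using xs summable_on_reindex_bij_witness[where j="\<lambda>m. m + int n" and i="\<lambda>m. m - int n"
        and S=UNIV and T=UNIV and g="\<lambda>m. (cmod (x m))^2" and h="\<lambda>m. (cmod (x (m - int n)))^2"]
    by auto
  have pt: "(cmod (x (m - int n)))^2 \<le> (cmod ((Fshift ^^ n) x m))^2" for m
  proof -
    have "cmod (x (m - int n)) \<le> Pr (m - int n) n * cmod (x (m - int n))"
      using Pr_ge1[of "m - int n" n] by (simp add: mult_le_cancel_right1)
    also have "\<dots> = cmod ((Fshift ^^ n) x m)"
      using Pr_pos[of "m - int n" n] by (simp add: F_pow norm_mult)
    finally show ?thesis by (rule power_mono) simp
  qed
  show ?thesis unfolding re by (rule infsum_mono[OF rs zs pt])
qed

lemma not_hyper: "\<not> M_hypercyclic Fshift Msub"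
proof
  assume "M_hypercyclic Fshift Msub"
  then obtain x where x: "x \<in> ell2"
    and d: "ell2_dense_in ({(Fshift ^^ n) x | n. True} \<inter> Msub) Msub"
    unfolding M_hypercyclic_def by blast
  have dd: "\<And>y e. y \<in> Msub \<Longrightarrow> 0 < e \<Longrightarrow>
       \<exists>n. (Fshift ^^ n) x \<in> Msub \<and> ell2_norm (\<lambda>k. (Fshift ^^ n) x k - y k) < e"
    using d unfolding ell2_dense_in_def by blast
  show False
  proof (cases "\<exists>m0. x m0 \<noteq> 0")
    case True
    then obtain m0 where m0: "x m0 \<noteq> 0" by blast
    define N where "N = infsum (\<lambda>m. (cmod (x m))^2) UNIV"
    have xs: "(\<lambda>m. (cmod (x m))^2) summable_on UNIV" using x by (simp add: ell2_def)
    have "(cmod (x m0))^2 \<le> N"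
      unfolding N_def using finite_sum_le_infsum[OF xs, of "{m0}"] by simp
    moreover have "0 < (cmod (x m0))^2" using m0 by simp
    ultimately have Npos: "0 < N" by linarith
    have zero: "(\<lambda>k. 0::complex) \<in> Msub" by (simp add: Msub_def ell2_def)
    obtain n where n: "(Fshift ^^ n) x \<in> Msub"
      "ell2_norm (\<lambda>k. (Fshift ^^ n) x k - 0) < sqrt N"
      using dd[OF zero, of "sqrt N"] Npos by auto
    have "N \<le> infsum (\<lambda>m. (cmod ((Fshift ^^ n) x m))^2) UNIV"
      unfolding N_def by (rule F_norm[OF x]) (use n in \<open>simp add: Msub_def\<close>)
    then have "sqrt N \<le> ell2_norm (\<lambda>k. (Fshift ^^ n) x k - 0)"
      by (simp add: ell2_norm_def)
    then show False using n by simp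
  next
    case False
    then have x0: "\<And>m. x m = 0" by blast
    have F0: "(Fshift ^^ n) x = (\<lambda>k. 0)" for n by (rule ext) (simp add: F_pow x0)
    define y :: "int \<Rightarrow> complex" where "y m = (if m = 1 then 1 else 0)" for m
    have fin: "(\<lambda>m. (cmod (y m))^2) summable_on UNIV"
      by (rule finite_nonzero_values_imp_summable_on) (simp add: y_def)
    have ev: "y (2 * k) = 0" for k
    proof -
      have "2 * k \<noteq> 1" by presburger
      then show ?thesis by (simp add: y_def)
    qed
    have yM: "y \<in> Msub" using fin ev by (simp add: Msub_def ell2_def)
    obtain n where n: "ell2_norm (\<lambda>k. (Fshift ^^ n) x k - y k) < 1"
      using dd[OF yM, of 1] by auto
    have "infsum (\<lambda>k. (cmod (0 - y k))^2) UNIV = 1"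
      by (subst infsum_cong_neutral[where T="{1}" and g="\<lambda>k. 1"]) (auto simp: y_def)
    then have "ell2_norm (\<lambda>k. (Fshift ^^ n) x k - y k) = 1"
      by (simp add: ell2_norm_def F0)
    then show False using n by simp
  qed
qed

theorem mainTheorem8:
  shows "M_diskcyclic Fshift Msub \<and> \<not> M_hypercyclic Fshift Msub"
  using disk not_hyper by blast


end
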